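(* Let $\pi(m)=(1/2)^m$ for $m\in\mathbb{N}^+$ (and $\pi(m)=0$ otherwise), and let the proposal be $q(m,\{m+1\})=\theta=1-q(m,\{m-1\})$ for $m\in\mathbb{Z}$, with $\theta\in(0,1)$. Take $N=1$ and weights $W_{m,1}=(b-\varepsilon_m)\,\mathrm{Ber}(s_m)+\varepsilon_m$, where $b>1$, $\varepsilon_m=m^{-(3-(m \bmod 3))}$, $\mathrm{Ber}(s_m)$ is a Bernoulli random variable with parameter $s_m$, and $s_m=\frac{1-\varepsilon_m}{b-\varepsilon_m}$ so that $\mathbb{E}[W_{m,1}]=1$. Then for any $\theta\in(0,1)$ there exists $b>1$ such that the Markov chain generated by the noisy kernel $\tilde P_1$ is transient.
   Context: Noisy Metropolis–Hastings kernel $\tilde P_N$: from state $m$, propose $Y\sim q(m,\cdot)$, draw independent weights $W\sim Q_{m,N}$, $U\sim Q_{Y,N}$ (the laws of $W_{m,N}$, $W_{Y,N}$), and move to $Y$ with probability $\min\{1,\frac{\pi(Y)q(Y,m)}{\pi(m)q(m,Y)}\cdot\frac{U}{W}\}$, otherwise stay at $m$ (proposals outside $\mathbb{N}^+$ have $\pi(Y)=0$ and are rejected). *)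

theory Defs
  imports "HOL-Probability.Probability"
begin

definition target :: "int \<Rightarrow> real" where
  "target m = (if m \<ge> 1 then (1/2) ^ nat m else 0)"

definition prop_dens :: "real \<Rightarrow> int \<Rightarrow> int \<Rightarrow> real" where
  "prop_dens \<theta> m y = (if y = m + 1 then \<theta> else if y = m - 1 then 1 - \<theta> else 0)"

definition eps :: "int \<Rightarrow> real" where
  "eps m = 1 / (real_of_int m) ^ (3 - nat (m mod 3))"

definition sprob :: "real \<Rightarrow> int \<Rightarrow> real" where
  "sprob b m = (1 - eps m) / (b - eps m)"

definition weight_pmf :: "real \<Rightarrow> int \<Rightarrow> real pmf" where
  "weight_pmf b m = map_pmf (\<lambda>c. (b - eps m) * (if c then 1 else 0) + eps m) (bernoulli_pmf (sprob b m))"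

definition noisy_kernel :: "real \<Rightarrow> real \<Rightarrow> int \<Rightarrow> int pmf" where
  "noisy_kernel \<theta> b m =
     bernoulli_pmf \<theta> \<bind> (\<lambda>up.
       let y = (if up then m + 1 else m - 1) in
       if y < 1 then return_pmf m
       else weight_pmf b m \<bind> (\<lambda>w. weight_pmf b y \<bind> (\<lambda>u.
         bernoulli_pmf (min 1 ((target y * prop_dens \<theta> y m) / (target m * prop_dens \<theta> m y) * (u / w)))
           \<bind> (\<lambda>acc. return_pmf (if acc then y else m)))))"

text \<open>hit_prob K x n y: probability that the chain with kernel K started at y
  visits x at some time in {0..n}.\<close>
fun hit_prob :: "('a \<Rightarrow> 'a pmf) \<Rightarrow> 'a \<Rightarrow> nat \<Rightarrow> 'a \<Rightarrow> real" where
  "hit_prob K x 0 y = (if y = x then 1 else 0)"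
| "hit_prob K x (Suc n) y = (if y = x then 1 else measure_pmf.expectation (K y) (hit_prob K x n))"

text \<open>Return probability P_x(tau_x < infinity), tau_x = inf {n >= 1. X_n = x}.\<close>
definition return_prob :: "('a \<Rightarrow> 'a pmf) \<Rightarrow> 'a \<Rightarrow> real" where
  "return_prob K x = (SUP n. measure_pmf.expectation (K x) (hit_prob K x n))"

definition transient_state :: "('a \<Rightarrow> 'a pmf) \<Rightarrow> 'a \<Rightarrow> bool" where
  "transient_state K x \<longleftrightarrow> return_prob K x < 1"

definition transient_chain_pos :: "(int \<Rightarrow> int pmf) \<Rightarrow> bool" where
  "transient_chain_pos K \<longleftrightarrow> (\<forall>m \<ge> 1. transient_state K m)"

end

theory Submission
  imports Defs
begin

lemma eps_bounds: assumes "m \<ge> 1" shows "0 < eps m" "eps m \<le> 1"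
proof -
  have "(1::real) \<le> real_of_int m ^ (3 - nat (m mod 3))" using assms by (simp add: one_le_power)
  then show "0 < eps m" "eps m \<le> 1" unfolding eps_def by auto
qed

lemma eps_half: assumes "m \<ge> 2" shows "eps m \<le> 1/2"
proof -
  have k: "3 - nat (m mod 3) \<ge> 1" by (simp add: nat_less_iff)
  have "real_of_int m \<le> real_of_int m ^ (3 - nat (m mod 3))"
    using assms k by (metis of_int_1_le_iff one_le_numeral order_trans power_increasing power_one_right)
  then have "2 \<le> real_of_int m ^ (3 - nat (m mod 3))" using assms by linarith
  then show ?thesis unfolding eps_def by (simp add: field_simps)
qed

lemma sprob_bounds: assumes "m \<ge> 1" "b > 1" shows "0 \<le> sprob b m" "sprob b m \<le> 1/b" "sprob b m \<le> 1"
proof -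
  have e: "0 < eps m" "eps m \<le> 1" using eps_bounds assms by auto
  show "0 \<le> sprob b m" unfolding sprob_def using e assms by simp
  show "sprob b m \<le> 1/b" unfolding sprob_def using e assms by (simp add: field_simps)
  then show "sprob b m \<le> 1" using assms by (smt (verit) le_divide_eq_1_pos)
qed

lemma E_weight: assumes "m \<ge> 1" "b > 1"
  shows "measure_pmf.expectation (weight_pmf b m) F = sprob b m * F b + (1 - sprob b m) * F (eps m)"
  using sprob_bounds[OF assms] unfolding weight_pmf_def by simp

lemma ratio_up: assumes "m \<ge> 1" "0 < \<theta>" "\<theta> < 1"
  shows "target (m+1) * prop_dens \<theta> (m+1) m / (target m * prop_dens \<theta> m (m+1)) = (1-\<theta>)/(2*\<theta>)"
proof -
  have "nat (m+1) = Suc (nat m)" using assms by simp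
  then show ?thesis using assms unfolding target_def prop_dens_def by (simp add: field_simps)
qed

lemma ratio_down: assumes "m \<ge> 2" "0 < \<theta>" "\<theta> < 1"
  shows "target (m-1) * prop_dens \<theta> (m-1) m / (target m * prop_dens \<theta> m (m-1)) = 2*\<theta>/(1-\<theta>)"
proof -
  have "nat m = Suc (nat (m-1))" using assms by simp
  then show ?thesis using assms unfolding target_def prop_dens_def by (simp add: field_simps)
qed

lemma support: "set_pmf (noisy_kernel \<theta> b m) \<subseteq> {m-1, m, m+1}"
  unfolding noisy_kernel_def Let_def by (auto split: if_splits)

lemma pmf_acc: assumes "y \<noteq> m" "0 \<le> a"
  shows "pmf (bernoulli_pmf (min 1 a) \<bind> (\<lambda>acc. return_pmf (if acc then y else m))) y = min 1 a"
  using assms by (simp add: pmf_bind)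

lemma pmf_up: assumes "m \<ge> 1" "0 < \<theta>" "\<theta> < 1" "b > 1"
  shows "pmf (noisy_kernel \<theta> b m) (m+1) = \<theta> * (
     sprob b m * (sprob b (m+1) * min 1 ((1-\<theta>)/(2*\<theta>) * (b/b)) + (1 - sprob b (m+1)) * min 1 ((1-\<theta>)/(2*\<theta>) * (eps (m+1)/b)))
   + (1 - sprob b m) * (sprob b (m+1) * min 1 ((1-\<theta>)/(2*\<theta>) * (b/eps m)) + (1 - sprob b (m+1)) * min 1 ((1-\<theta>)/(2*\<theta>) * (eps (m+1)/eps m))))"
proof -
  have F: "pmf (if m - 1 < 1 then return_pmf m
       else weight_pmf b m \<bind> (\<lambda>w. weight_pmf b (m-1) \<bind> (\<lambda>u.
         bernoulli_pmf (min 1 ((target (m-1) * prop_dens \<theta> (m-1) m) / (target m * prop_dens \<theta> m (m-1)) * (u / w)))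
           \<bind> (\<lambda>acc. return_pmf (if acc then m-1 else m))))) (m+1) = 0"
    by (auto simp: pmf_eq_0_set_pmf)
  have e: "0 < eps m" "0 < eps (m+1)" using eps_bounds assms by auto
  have T: "pmf (weight_pmf b m \<bind> (\<lambda>w. weight_pmf b (m+1) \<bind> (\<lambda>u.
         bernoulli_pmf (min 1 ((target (m+1) * prop_dens \<theta> (m+1) m) / (target m * prop_dens \<theta> m (m+1)) * (u / w)))
           \<bind> (\<lambda>acc. return_pmf (if acc then m+1 else m))))) (m+1) = 
     sprob b m * (sprob b (m+1) * min 1 ((1-\<theta>)/(2*\<theta>) * (b/b)) + (1 - sprob b (m+1)) * min 1 ((1-\<theta>)/(2*\<theta>) * (eps (m+1)/b)))
   + (1 - sprob b m) * (sprob b (m+1) * min 1 ((1-\<theta>)/(2*\<theta>) * (b/eps m)) + (1 - sprob b (m+1)) * min 1 ((1-\<theta>)/(2*\<theta>) * (eps (m+1)/eps m)))"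
    using assms e by (simp add: pmf_bind E_weight ratio_up pmf_acc del: min_less_iff_conj)
  show ?thesis
    unfolding noisy_kernel_def Let_def
    apply (subst pmf_bind)
    apply (subst integral_bernoulli_pmf)
    using assms F T by auto
qed

lemma pmf_down: assumes "m \<ge> 2" "0 < \<theta>" "\<theta> < 1" "b > 1"
  shows "pmf (noisy_kernel \<theta> b m) (m-1) = (1-\<theta>) * (
     sprob b m * (sprob b (m-1) * min 1 (2*\<theta>/(1-\<theta>) * (b/b)) + (1 - sprob b (m-1)) * min 1 (2*\<theta>/(1-\<theta>) * (eps (m-1)/b)))
   + (1 - sprob b m) * (sprob b (m-1) * min 1 (2*\<theta>/(1-\<theta>) * (b/eps m)) + (1 - sprob b (m-1)) * min 1 (2*\<theta>/(1-\<theta>) * (eps (m-1)/eps m))))"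
proof -
  have F: "pmf (if m + 1 < 1 then return_pmf m
       else weight_pmf b m \<bind> (\<lambda>w. weight_pmf b (m+1) \<bind> (\<lambda>u.
         bernoulli_pmf (min 1 ((target (m+1) * prop_dens \<theta> (m+1) m) / (target m * prop_dens \<theta> m (m+1)) * (u / w)))
           \<bind> (\<lambda>acc. return_pmf (if acc then m+1 else m))))) (m-1) = 0"
    by (auto simp: pmf_eq_0_set_pmf)
  have e: "0 < eps m" "0 < eps (m-1)" using eps_bounds assms by auto
  have T: "pmf (weight_pmf b m \<bind> (\<lambda>w. weight_pmf b (m-1) \<bind> (\<lambda>u.
         bernoulli_pmf (min 1 ((target (m-1) * prop_dens \<theta> (m-1) m) / (target m * prop_dens \<theta> m (m-1)) * (u / w)))
           \<bind> (\<lambda>acc. return_pmf (if acc then m-1 else m))))) (m-1) = 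
     sprob b m * (sprob b (m-1) * min 1 (2*\<theta>/(1-\<theta>) * (b/b)) + (1 - sprob b (m-1)) * min 1 (2*\<theta>/(1-\<theta>) * (eps (m-1)/b)))
   + (1 - sprob b m) * (sprob b (m-1) * min 1 (2*\<theta>/(1-\<theta>) * (b/eps m)) + (1 - sprob b (m-1)) * min 1 (2*\<theta>/(1-\<theta>) * (eps (m-1)/eps m)))"
    using assms e by (simp add: pmf_bind E_weight ratio_down pmf_acc del: min_less_iff_conj)
  have nl: "\<not> m - 1 < 1" using assms by simp
  show ?thesis
    unfolding noisy_kernel_def Let_def
    apply (subst pmf_bind)
    apply (subst integral_bernoulli_pmf)
    using assms F T nl by auto
qed

lemma hit_le:
  fixes K :: "'a \<Rightarrow> 'a pmf" and f :: "'a \<Rightarrow> real"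
  assumes fin: "\<And>y. finite (set_pmf (K y))"
    and f0: "\<And>y. 0 \<le> f y" and fx: "f x = 1"
    and sup: "\<And>y. y \<noteq> x \<Longrightarrow> measure_pmf.expectation (K y) f \<le> f y"
  shows "hit_prob K x n y \<le> f y"
proof (induction n arbitrary: y)
  case 0 then show ?case using f0 fx by simp
next
  case (Suc n)
  show ?case
  proof (cases "y = x")
    case True then show ?thesis using fx by simp
  next
    case False
    have "measure_pmf.expectation (K y) (hit_prob K x n) \<le> measure_pmf.expectation (K y) f"
      by (rule integral_mono) (auto intro: integrable_measure_pmf_finite fin Suc.IH)
    then show ?thesis using False sup[OF False] by simp
  qed
qed

lemma transient_crit:
  fixes K :: "'a \<Rightarrow> 'a pmf" and f :: "'a \<Rightarrow> real"
  assumes fin: "\<And>y. finite (set_pmf (K y))"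
    and f0: "\<And>y. 0 \<le> f y" and fx: "f x = 1"
    and sup: "\<And>y. y \<noteq> x \<Longrightarrow> measure_pmf.expectation (K y) f \<le> f y"
    and lt: "measure_pmf.expectation (K x) f < 1"
  shows "transient_state K x"
proof -
  have "measure_pmf.expectation (K x) (hit_prob K x n) \<le> measure_pmf.expectation (K x) f" for n
    by (rule integral_mono) (auto intro: integrable_measure_pmf_finite fin hit_le[OF fin f0 fx sup])
  then have "return_prob K x \<le> measure_pmf.expectation (K x) f"
    unfolding return_prob_def by (intro cSUP_least) auto
  then show ?thesis using lt unfolding transient_state_def by simp
qed

lemma E3: assumes "set_pmf Km \<subseteq> {m-1,m,m+1::int}"
  shows "measure_pmf.expectation Km g = g(m-1) * pmf Km (m-1) + g m * pmf Km m + g(m+1) * pmf Km (m+1)"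
  using assms by (subst integral_measure_pmf_real[where A="{m-1,m,m+1}"]) auto

lemma sum3: assumes "set_pmf Km \<subseteq> {m-1,m,m+1::int}"
  shows "pmf Km (m-1) + pmf Km m + pmf Km (m+1) = 1"
  using E3[OF assms, of "\<lambda>_. 1"] by simp

fun hh :: "(int \<Rightarrow> real) \<Rightarrow> int \<Rightarrow> nat \<Rightarrow> real" where
  "hh R x 0 = 1"
| "hh R x (Suc n) = hh R x n * R (x + int n + 1)"

lemma chain_transient:
  fixes K :: "int \<Rightarrow> int pmf" and \<rho> :: real
  assumes supp: "\<And>m. set_pmf (K m) \<subseteq> {m-1,m,m+1}"
    and Ppos: "\<And>m. m \<ge> 1 \<Longrightarrow> pmf (K m) (m+1) > 0"
    and block: "\<And>m. m \<ge> M \<Longrightarrow> R m * R (m+1) * R (m+2) \<le> \<rho>"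
    and Rdef: "\<And>m. R m = pmf (K m) (m-1) / pmf (K m) (m+1)"
    and rho: "\<rho> < 1" and x: "x \<ge> 1"
  shows "transient_state K x"
proof -
  define h where "h = hh R x"
  define S where "S n = (\<Sum>i<n. h i)" for n
  have R0: "R m \<ge> 0" for m unfolding Rdef by simp
  have h0: "h n \<ge> 0" for n unfolding h_def by (induction n) (auto simp: R0)
  have Smono: "S n \<le> S (n + k)" for n k
    unfolding S_def by (rule sum_mono2) (auto simp: h0)
  have rho0: "\<rho> \<ge> 0" using block[of "max M 0"] R0
    by (smt (verit) max.cobounded1 mult_nonneg_nonneg)
  define N0 where "N0 = nat (M - x)"
  have h3: "h (n+3) \<le> \<rho> * h n" if "n \<ge> N0" for n
  proof -
    have m: "x + int n + 1 \<ge> M" using that unfolding N0_def by linarith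
    have e: "h (n+3) = h n * (R (x + int n + 1) * R (x + int n + 1 + 1) * R (x + int n + 1 + 2))"
      unfolding h_def by (simp add: numeral_3_eq_3 algebra_simps)
    show ?thesis unfolding e by (metis block[OF m] h0 mult.commute mult_left_mono)
  qed
  define A where "A = S (N0 + 3)"
  have claim: "S (N + N0 + 3) \<le> A + \<rho> * S (N + N0)" for N
  proof (induction N)
    case 0 then show ?case unfolding A_def S_def using rho0 h0 by (simp add: sum_nonneg)
  next
    case (Suc N)
    have "S (Suc N + N0 + 3) = S (N + N0 + 3) + h (N + N0 + 3)" unfolding S_def by (simp only: add_Suc sum.lessThan_Suc)
    also have "\<dots> \<le> A + \<rho> * S (N + N0) + \<rho> * h (N + N0)" using Suc h3[of "N + N0"] by simp
    also have "\<dots> = A + \<rho> * S (Suc N + N0)" unfolding S_def by (simp add: algebra_simps)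
    finally show ?case .
  qed
  define B where "B = A / (1 - \<rho>)"
  have SB: "S n \<le> B" for n
  proof -
    have "S (n + N0 + 3) \<le> A + \<rho> * S (n + N0 + 3)"
      using claim[of n] Smono[of "n + N0" 3] rho0 by (smt (verit) mult_left_mono)
    then have "S (n + N0 + 3) \<le> B" unfolding B_def using rho by (simp add: field_simps)
    moreover have "S n \<le> S (n + N0 + 3)" using Smono[of n "N0 + 3"] by (simp add: add.assoc)
    ultimately show ?thesis by linarith
  qed
  have S0: "S n \<ge> 0" for n unfolding S_def by (simp add: sum_nonneg h0)
  have B0: "B \<ge> 0" using SB[of 0] S0[of 0] by linarith
  define \<delta> where "\<delta> = 1 / (B + 1)"
  have d0: "\<delta> > 0" unfolding \<delta>_def using B0 by simp
  have dS: "\<delta> * S n \<le> 1" for n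
  proof -
    have "\<delta> * S n \<le> \<delta> * (B+1)" using SB[of n] d0 by (intro mult_left_mono) auto
    then show ?thesis unfolding \<delta>_def using B0 by simp
  qed
  define f where "f m = (if m \<le> x then 1 else 1 - \<delta> * S (nat (m - x)))" for m
  have f0: "0 \<le> f m" for m unfolding f_def using dS by auto
  have f1: "f m \<le> 1" for m unfolding f_def using dS d0 S0 by (auto intro: mult_nonneg_nonneg)
  have fx: "f x = 1" unfolding f_def by simp
  have fin: "finite (set_pmf (K y))" for y by (rule finite_subset[OF supp]) auto
  show ?thesis
  proof (rule transient_crit[where K=K and f=f])
    show "finite (set_pmf (K y))" for y by (rule fin)
    show "0 \<le> f y" for y by (rule f0)
    show "f x = 1" by (rule fx)
  next
    fix y assume "y \<noteq> x"
    show "measure_pmf.expectation (K y) f \<le> f y"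
    proof (cases "y < x")
      case True
      have "measure_pmf.expectation (K y) f \<le> pmf (K y) (y-1) + pmf (K y) y + pmf (K y) (y+1)"
        unfolding E3[OF supp[of y]] using f1 f0
        by (intro add_mono mult_left_le_one_le) (auto simp: mult_le_one)
      then show ?thesis using sum3[OF supp[of y]] True unfolding f_def by simp
    next
      case False
      with \<open>y \<noteq> x\<close> have yx: "y > x" by simp
      define n where "n = nat (y - x)"
      have n1: "n \<ge> 1" and yn: "y = x + int n" using yx unfolding n_def by auto
      have Py: "pmf (K y) (y+1) > 0" using Ppos yx x by simp
      have fy: "f y = 1 - \<delta> * S n" unfolding f_def n_def using yx by simp
      have "nat (y + 1 - x) = Suc n" unfolding n_def using yx by simp
      then have fy1: "f (y+1) = f y - \<delta> * h n" unfolding f_def fy using yx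
        by (simp add: S_def algebra_simps n_def)
      obtain k where k: "n = Suc k" using n1 by (cases n) auto
      have fym: "f (y-1) = f y + \<delta> * h k"
      proof (cases "k = 0")
        case True
        then show ?thesis unfolding fy using k yn unfolding f_def S_def h_def by simp
      next
        case False
        then have "y - 1 > x" using yn k by simp
        moreover have "nat (y - 1 - x) = k" using yn k by simp
        ultimately show ?thesis unfolding fy f_def S_def using k by (simp add: n_def[symmetric] algebra_simps)
      qed
      have hn: "h n = h k * R y" unfolding h_def k using yn k by (simp add: algebra_simps)
      have key: "h n * pmf (K y) (y+1) = h k * pmf (K y) (y-1)"
        unfolding hn Rdef using Py by simp
      have "measure_pmf.expectation (K y) f
          = f y * (pmf (K y) (y-1) + pmf (K y) y + pmf (K y) (y+1)) + \<delta> * (h k * pmf (K y) (y-1) - h n * pmf (K y) (y+1))"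
        unfolding E3[OF supp[of y]] fy1 fym by (simp add: algebra_simps)
      also have "\<dots> = f y" using sum3[OF supp[of y]] key by simp
      finally show ?thesis by simp
    qed
  next
    have fx1: "f (x+1) = 1 - \<delta>" unfolding f_def S_def h_def by simp
    have fxm: "f (x-1) = 1" unfolding f_def by simp
    have "measure_pmf.expectation (K x) f = 1 - \<delta> * pmf (K x) (x+1)"
      unfolding E3[OF supp[of x]] fx1 fxm fx using sum3[OF supp[of x]] by (simp add: algebra_simps)
    then show "measure_pmf.expectation (K x) f < 1" using d0 Ppos[OF x] by simp
  qed
qed

lemma mix_bounds:
  fixes s t A1 A2 A3 A4 :: real
  assumes "0\<le>s" "s\<le>1" "0\<le>t" "t\<le>1" "0\<le>A1" "A1\<le>1" "0\<le>A2" "A2\<le>1" "0\<le>A3" "A3\<le>1" "0\<le>A4" "A4\<le>1"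
  shows "s*(t*A1+(1-t)*A2)+(1-s)*(t*A3+(1-t)*A4) \<ge> (1-s)*(1-t)*A4"
    and "s*(t*A1+(1-t)*A2)+(1-s)*(t*A3+(1-t)*A4) \<ge> (1-s)*t*A3"
    and "s*(t*A1+(1-t)*A2)+(1-s)*(t*A3+(1-t)*A4) \<le> s + t + A4"
    and "s*(t*A1+(1-t)*A2)+(1-s)*(t*A3+(1-t)*A4) \<le> 1"
proof -
  have a: "0 \<le> s*(t*A1+(1-t)*A2)" "0 \<le> (1-s)*t*A3" "0 \<le> (1-s)*(1-t)*A4"
    using assms by (auto intro!: mult_nonneg_nonneg add_nonneg_nonneg)
  show "s*(t*A1+(1-t)*A2)+(1-s)*(t*A3+(1-t)*A4) \<ge> (1-s)*(1-t)*A4"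
    using a by (simp add: algebra_simps)
  show "s*(t*A1+(1-t)*A2)+(1-s)*(t*A3+(1-t)*A4) \<ge> (1-s)*t*A3"
    using a by (simp add: algebra_simps)
  have b1: "t*A1+(1-t)*A2 \<le> 1" "t*A3+(1-t)*A4 \<le> 1"
    using assms by (smt (verit) mult_left_le mult_right_le_one_le mult_nonneg_nonneg)+
  have "s*(t*A1+(1-t)*A2) \<le> s" using b1 assms by (simp add: mult_left_le)
  moreover have "(1-s)*(t*A3+(1-t)*A4) \<le> t*A3+(1-t)*A4" using assms a
    by (smt (verit) b1 mult_left_le_one_le mult_nonneg_nonneg)
  moreover have "t*A3 \<le> t" "(1-t)*A4 \<le> A4" using assms by (auto simp: mult_left_le mult_left_le_one_le)
  ultimately show "s*(t*A1+(1-t)*A2)+(1-s)*(t*A3+(1-t)*A4) \<le> s + t + A4" by linarith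
  have "(1-s)*(t*A3+(1-t)*A4) \<le> (1-s)" using b1 assms by (simp add: mult_left_le)
  with \<open>s*(t*A1+(1-t)*A2) \<le> s\<close> show "s*(t*A1+(1-t)*A2)+(1-s)*(t*A3+(1-t)*A4) \<le> 1" by linarith
qed

lemma eps_r0: "m mod 3 = 0 \<Longrightarrow> eps m = 1 / real_of_int m ^ 3" unfolding eps_def by simp
lemma eps_r1: "m mod 3 = 1 \<Longrightarrow> eps m = 1 / real_of_int m ^ 2" unfolding eps_def by simp
lemma eps_r2: "m mod 3 = 2 \<Longrightarrow> eps m = 1 / real_of_int m" unfolding eps_def by simp

lemma sprob_lower: assumes "m \<ge> 2" "b > 1" shows "sprob b m \<ge> 1 / (2*b)"
proof -
  have e: "0 < eps m" "eps m \<le> 1/2" using eps_bounds eps_half assms by auto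
  have "(1 - eps m) / (b - eps m) \<ge> (1/2) / b"
    using e assms by (intro frac_le) auto
  then show ?thesis unfolding sprob_def by simp
qed

lemma min1: "0 \<le> x \<Longrightarrow> 0 \<le> min 1 (x::real)" "min 1 (x::real) \<le> 1" by auto

lemma P_lower_all:
  assumes "m \<ge> 1" "0 < \<theta>" "\<theta> < 1" "b \<ge> 2" "b * ((1-\<theta>)/(2*\<theta>)) \<ge> 1"
  shows "pmf (noisy_kernel \<theta> b m) (m+1) \<ge> \<theta> / (4*b)"
proof -
  define c where "c = (1-\<theta>)/(2*\<theta>)"
  have c0: "c > 0" unfolding c_def using assms by simp
  have e: "0 < eps m" "eps m \<le> 1" "0 < eps (m+1)" "eps (m+1) \<le> 1" using eps_bounds assms by auto
  have s: "0 \<le> sprob b m" "sprob b m \<le> 1/b" "sprob b m \<le> 1" "0 \<le> sprob b (m+1)" "sprob b (m+1) \<le> 1"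
    using sprob_bounds[of m b] sprob_bounds[of "m+1" b] assms by auto
  have s1: "sprob b (m+1) \<ge> 1/(2*b)" using sprob_lower[of "m+1" b] assms by simp
  have "b / eps m \<ge> b" using e assms by (simp add: field_simps mult_left_le)
  then have "c * (b / eps m) \<ge> 1" using assms c0 unfolding c_def
    by (smt (verit) c_def mult_left_mono mult.commute)
  then have A3: "min 1 (c * (b / eps m)) = 1" by simp
  have P: "pmf (noisy_kernel \<theta> b m) (m+1) = \<theta> * (
     sprob b m * (sprob b (m+1) * min 1 (c * (b/b)) + (1 - sprob b (m+1)) * min 1 (c * (eps (m+1)/b)))
   + (1 - sprob b m) * (sprob b (m+1) * min 1 (c * (b/eps m)) + (1 - sprob b (m+1)) * min 1 (c * (eps (m+1)/eps m))))"
    unfolding c_def using pmf_up assms by simp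
  have M: "(1 - sprob b m) * sprob b (m+1) * min 1 (c * (b/eps m)) \<le> sprob b m * (sprob b (m+1) * min 1 (c * (b/b)) + (1 - sprob b (m+1)) * min 1 (c * (eps (m+1)/b)))
   + (1 - sprob b m) * (sprob b (m+1) * min 1 (c * (b/eps m)) + (1 - sprob b (m+1)) * min 1 (c * (eps (m+1)/eps m)))"
    by (rule mix_bounds(2)[OF s(1,3,4,5) min1 min1 min1 min1]) (use c0 e assms in \<open>auto intro!: mult_nonneg_nonneg divide_nonneg_nonneg\<close>)
  have h: "1/b \<le> 1/2" using assms by (simp add: field_simps)
  have "(1 - sprob b m) \<ge> 1/2" using s h by linarith
  then have "(1/2) * (1/(2*b)) \<le> (1 - sprob b m) * sprob b (m+1)"
    using s1 assms by (intro mult_mono) auto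
  then have "\<theta> * ((1/2) * (1/(2*b))) \<le> \<theta> * ((1 - sprob b m) * sprob b (m+1) * min 1 (c * (b/eps m)))"
    unfolding A3 using assms by (intro mult_left_mono) auto
  also have "\<dots> \<le> pmf (noisy_kernel \<theta> b m) (m+1)" unfolding P using M assms by (intro mult_left_mono) auto
  finally show ?thesis by (simp add: field_simps)
qed

lemma alg_a: fixes x c :: real assumes "x \<ge> 1" "c > 0" "c * x \<ge> 4"
  shows "c * ((1 / (x+1)^2) / (1 / x^3)) \<ge> 1"
proof -
  have "x \<le> x * x" using assms mult_left_mono[of 1 x x] by simp
  moreover have "(x+1)^2 = x*x + 2*x + 1" "4*x^2 = 4*(x*x)" by (simp_all add: power2_eq_square algebra_simps)
  ultimately have "(x+1)^2 \<le> 4 * x^2" using assms by linarith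
  also have "4 * x^2 \<le> (c*x) * x^2" using assms by (intro mult_right_mono) auto
  finally have "(x+1)^2 \<le> c * x^3" by (simp add: power2_eq_square power3_eq_cube algebra_simps)
  then show ?thesis using assms by (simp add: field_simps)
qed

lemma alg_b: fixes x c :: real assumes "x \<ge> 1" "c > 0" "c * x \<ge> 2"
  shows "c * ((1 / (x+1)) / (1 / x^2)) \<ge> 1"
proof -
  have "(x+1) \<le> 2 * x" using assms by simp
  also have "2 * x \<le> (c*x) * x" using assms by (intro mult_right_mono) auto
  finally have "(x+1) \<le> c * x^2" by (simp add: power2_eq_square algebra_simps)
  then show ?thesis using assms by (simp add: field_simps)
qed

lemma alg_c: fixes x d b :: real assumes "x \<ge> 2" "d > 0" "b > 0" "x - 1 \<ge> 4 * b * d"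
  shows "d * ((1 / (x-1)^3) / (1 / x^2)) \<le> 1 / b"
proof -
  have "(3*x-2)*(x-2) \<ge> 0" using assms by (intro mult_nonneg_nonneg) auto
  then have "x^2 \<le> 4 * (x-1)^2" using assms by (simp add: power2_eq_square algebra_simps)
  then have "b * d * x^2 \<le> b * d * (4 * (x-1)^2)" using assms by (intro mult_left_mono) auto
  also have "\<dots> = (4*b*d) * (x-1)^2" by simp
  also have "\<dots> \<le> (x-1) * (x-1)^2" using assms by (intro mult_right_mono) auto
  finally have "b * d * x^2 \<le> (x-1)^3" by (simp add: power2_eq_square power3_eq_cube)
  then show ?thesis using assms by (simp add: field_simps)
qed

lemma alg_d: fixes x d b :: real assumes "x \<ge> 2" "d > 0" "b > 0" "x - 1 \<ge> 2 * b * d"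
  shows "d * ((1 / (x-1)^2) / (1 / x)) \<le> 1 / b"
proof -
  have "x \<le> 2 * (x-1)" using assms by simp
  then have "b * d * x \<le> b * d * (2 * (x-1))" using assms by (intro mult_left_mono) auto
  also have "\<dots> = (2*b*d) * (x-1)" by simp
  also have "\<dots> \<le> (x-1) * (x-1)" using assms by (intro mult_right_mono) auto
  finally have "b * d * x \<le> (x-1)^2" by (simp add: power2_eq_square)
  then show ?thesis using assms by (simp add: field_simps)
qed

lemma P_lower_big:
  assumes "m \<ge> 1" "0 < \<theta>" "\<theta> < 1" "b \<ge> 2" "(1-\<theta>)/(2*\<theta>) * (eps (m+1)/eps m) \<ge> 1"
  shows "pmf (noisy_kernel \<theta> b m) (m+1) \<ge> \<theta> / 4"
proof -
  define c where "c = (1-\<theta>)/(2*\<theta>)"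
  have c0: "c > 0" unfolding c_def using assms by simp
  have e: "0 < eps m" "eps m \<le> 1" "0 < eps (m+1)" "eps (m+1) \<le> 1" using eps_bounds assms by auto
  have s: "0 \<le> sprob b m" "sprob b m \<le> 1/b" "sprob b m \<le> 1" "0 \<le> sprob b (m+1)" "sprob b (m+1) \<le> 1" "sprob b (m+1) \<le> 1/b"
    using sprob_bounds[of m b] sprob_bounds[of "m+1" b] assms by auto
  have A4: "min 1 (c * (eps (m+1)/eps m)) = 1" using assms unfolding c_def by simp
  have P: "pmf (noisy_kernel \<theta> b m) (m+1) = \<theta> * (
     sprob b m * (sprob b (m+1) * min 1 (c * (b/b)) + (1 - sprob b (m+1)) * min 1 (c * (eps (m+1)/b)))
   + (1 - sprob b m) * (sprob b (m+1) * min 1 (c * (b/eps m)) + (1 - sprob b (m+1)) * min 1 (c * (eps (m+1)/eps m))))"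
    unfolding c_def using pmf_up assms by simp
  have M: "(1 - sprob b m) * (1 - sprob b (m+1)) * min 1 (c * (eps (m+1)/eps m)) \<le> sprob b m * (sprob b (m+1) * min 1 (c * (b/b)) + (1 - sprob b (m+1)) * min 1 (c * (eps (m+1)/b)))
   + (1 - sprob b m) * (sprob b (m+1) * min 1 (c * (b/eps m)) + (1 - sprob b (m+1)) * min 1 (c * (eps (m+1)/eps m)))"
    by (rule mix_bounds(1)[OF s(1,3,4,5) min1 min1 min1 min1]) (use c0 e assms in \<open>auto intro!: mult_nonneg_nonneg divide_nonneg_nonneg\<close>)
  have h: "1/b \<le> 1/2" using assms by (simp add: field_simps)
  have "(1 - sprob b m) \<ge> 1/2" "(1 - sprob b (m+1)) \<ge> 1/2" using s h by linarith+
  then have "(1/2) * (1/2) \<le> (1 - sprob b m) * (1 - sprob b (m+1))"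
    by (intro mult_mono) auto
  then have "\<theta> * ((1/2) * (1/2)) \<le> \<theta> * ((1 - sprob b m) * (1 - sprob b (m+1)) * min 1 (c * (eps (m+1)/eps m)))"
    unfolding A4 using assms by (intro mult_left_mono) auto
  also have "\<dots> \<le> pmf (noisy_kernel \<theta> b m) (m+1)" unfolding P using M assms by (intro mult_left_mono) auto
  finally show ?thesis by (simp add: field_simps)
qed

lemma Q_upper:
  assumes "m \<ge> 2" "0 < \<theta>" "\<theta> < 1" "b \<ge> 2"
  shows "pmf (noisy_kernel \<theta> b m) (m-1) \<le> 1 - \<theta>"
    and "2*\<theta>/(1-\<theta>) * (eps (m-1)/eps m) \<le> 1/b \<Longrightarrow> pmf (noisy_kernel \<theta> b m) (m-1) \<le> (1 - \<theta>) * (3/b)"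
proof -
  define d where "d = 2*\<theta>/(1-\<theta>)"
  have d0: "d > 0" unfolding d_def using assms by simp
  have e: "0 < eps m" "eps m \<le> 1" "0 < eps (m-1)" "eps (m-1) \<le> 1" using eps_bounds assms by auto
  have s: "0 \<le> sprob b m" "sprob b m \<le> 1" "0 \<le> sprob b (m-1)" "sprob b (m-1) \<le> 1" "sprob b m \<le> 1/b" "sprob b (m-1) \<le> 1/b"
    using sprob_bounds[of m b] sprob_bounds[of "m-1" b] assms by auto
  have Q: "pmf (noisy_kernel \<theta> b m) (m-1) = (1-\<theta>) * (
     sprob b m * (sprob b (m-1) * min 1 (d * (b/b)) + (1 - sprob b (m-1)) * min 1 (d * (eps (m-1)/b)))
   + (1 - sprob b m) * (sprob b (m-1) * min 1 (d * (b/eps m)) + (1 - sprob b (m-1)) * min 1 (d * (eps (m-1)/eps m))))"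
    unfolding d_def using pmf_down assms by simp
  note MB = mix_bounds[OF s(1,2,3,4) min1 min1 min1 min1, of "d * (b/b)" "d * (eps (m-1)/b)" "d * (b/eps m)" "d * (eps (m-1)/eps m)"]
  have nn: "0 \<le> d * (b/b)" "0 \<le> d * (eps (m-1)/b)" "0 \<le> d * (b/eps m)" "0 \<le> d * (eps (m-1)/eps m)"
    using d0 e assms by auto
  have th: "0 \<le> 1 - \<theta>" using assms by simp
  show "pmf (noisy_kernel \<theta> b m) (m-1) \<le> 1 - \<theta>"
    unfolding Q using mult_left_mono[OF MB(4)[OF nn] th] by simp
  assume sm: "2*\<theta>/(1-\<theta>) * (eps (m-1)/eps m) \<le> 1/b"
  have "min 1 (d * (eps (m-1)/eps m)) \<le> 1/b" using sm unfolding d_def by simp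
  then have "sprob b m + sprob b (m-1) + min 1 (d * (eps (m-1)/eps m)) \<le> 3/b" using s by simp
  then show "pmf (noisy_kernel \<theta> b m) (m-1) \<le> (1 - \<theta>) * (3/b)"
    unfolding Q using MB(3)[OF nn] th by (smt (verit) mult_left_mono)
qed

lemma Rbound:
  assumes th: "0 < \<theta>" "\<theta> < 1" and b2: "b \<ge> 2" and bc: "b * ((1-\<theta>)/(2*\<theta>)) \<ge> 1"
    and m2: "m \<ge> 2" and mbig: "real_of_int m \<ge> 4*b*(2*\<theta>/(1-\<theta>)) + 4*(2*\<theta>/(1-\<theta>)) + 2"
  defines "R \<equiv> pmf (noisy_kernel \<theta> b m) (m-1) / pmf (noisy_kernel \<theta> b m) (m+1)"
  shows "m mod 3 = 0 \<Longrightarrow> R \<le> 4*((1-\<theta>)/\<theta>)"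
    and "m mod 3 = 1 \<Longrightarrow> R \<le> 12*((1-\<theta>)/\<theta>)/b"
    and "m mod 3 = 2 \<Longrightarrow> R \<le> 12*((1-\<theta>)/\<theta>)"
proof -
  define c where "c = (1-\<theta>)/(2*\<theta>)"
  define d where "d = 2*\<theta>/(1-\<theta>)"
  define x where "x = real_of_int m"
  have c0: "c > 0" and d0: "d > 0" and cd: "c * d = 1" unfolding c_def d_def using th by auto
  have x2: "x \<ge> 2" unfolding x_def using m2 by simp
  have xb: "x \<ge> 4*b*d + 4*d + 2" unfolding x_def d_def using mbig by simp
  have bd0: "b*d \<ge> 0" using b2 d0 by simp
  have cx4: "c * x \<ge> 4"
  proof -
    have "c * x \<ge> c * (4*d)" using xb bd0 c0 by (intro mult_left_mono) auto
    then show ?thesis using cd by (simp add: algebra_simps)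
  qed
  have Q0: "pmf (noisy_kernel \<theta> b m) (m-1) \<ge> 0" by simp
  have t0: "(1-\<theta>)/\<theta> > 0" using th by simp
  {
    assume r: "m mod 3 = 0"
    have r1: "(m+1) mod 3 = 1" using r by presburger
    have "c * (eps (m+1)/eps m) \<ge> 1"
      unfolding eps_r0[OF r] eps_r1[OF r1] using alg_a[of x c] x2 c0 cx4 unfolding x_def by simp
    then have P: "pmf (noisy_kernel \<theta> b m) (m+1) \<ge> \<theta>/4"
      using P_lower_big[of m \<theta> b] m2 th b2 unfolding c_def by simp
    have Q: "pmf (noisy_kernel \<theta> b m) (m-1) \<le> 1 - \<theta>" using Q_upper(1)[of m \<theta> b] m2 th b2 by simp
    have "R \<le> (1-\<theta>) / (\<theta>/4)" unfolding R_def using P Q th by (intro frac_le) auto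
    then show "R \<le> 4*((1-\<theta>)/\<theta>)" by (simp add: field_simps)
  }
  {
    assume r: "m mod 3 = 1"
    have r1: "(m+1) mod 3 = 2" "(m-1) mod 3 = 0" using r by presburger+
    have "c * (eps (m+1)/eps m) \<ge> 1"
      unfolding eps_r1[OF r] eps_r2[OF r1(1)] using alg_b[of x c] x2 c0 cx4 unfolding x_def by simp
    then have P: "pmf (noisy_kernel \<theta> b m) (m+1) \<ge> \<theta>/4"
      using P_lower_big[of m \<theta> b] m2 th b2 unfolding c_def by simp
    have "x - 1 \<ge> 4*b*d" using xb d0 by simp
    then have "d * (eps (m-1)/eps m) \<le> 1/b"
      unfolding eps_r1[OF r] eps_r0[OF r1(2)] using alg_c[of x d b] x2 d0 b2 unfolding x_def by simp
    then have Q: "pmf (noisy_kernel \<theta> b m) (m-1) \<le> (1 - \<theta>) * (3/b)"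
      using Q_upper(2)[of m \<theta> b] m2 th b2 unfolding d_def by simp
    have "R \<le> ((1 - \<theta>) * (3/b)) / (\<theta>/4)" unfolding R_def using P Q th b2 by (intro frac_le) auto
    then show "R \<le> 12*((1-\<theta>)/\<theta>)/b" by (simp add: field_simps)
  }
  {
    assume r: "m mod 3 = 2"
    have r1: "(m-1) mod 3 = 1" using r by presburger
    have P: "pmf (noisy_kernel \<theta> b m) (m+1) \<ge> \<theta>/(4*b)"
      using P_lower_all[of m \<theta> b] m2 th b2 bc by simp
    have "x - 1 \<ge> 2*b*d" using xb d0 bd0 by simp
    then have "d * (eps (m-1)/eps m) \<le> 1/b"
      unfolding eps_r2[OF r] eps_r1[OF r1] using alg_d[of x d b] x2 d0 b2 unfolding x_def by simp
    then have Q: "pmf (noisy_kernel \<theta> b m) (m-1) \<le> (1 - \<theta>) * (3/b)"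
      using Q_upper(2)[of m \<theta> b] m2 th b2 unfolding d_def by simp
    have "R \<le> ((1 - \<theta>) * (3/b)) / (\<theta>/(4*b))" unfolding R_def using P Q th b2 by (intro frac_le) auto
    also have "((1 - \<theta>) * (3/b)) / (\<theta>/(4*b)) = 12*((1-\<theta>)/\<theta>)" using b2 th by (simp add: field_simps)
    finally show "R \<le> 12*((1-\<theta>)/\<theta>)" .
  }
qed

lemma prod3: fixes a b c A B C :: real
  shows "0 \<le> a \<Longrightarrow> a \<le> A \<Longrightarrow> 0 \<le> b \<Longrightarrow> b \<le> B \<Longrightarrow> 0 \<le> c \<Longrightarrow> c \<le> C \<Longrightarrow> a*b*c \<le> A*B*C"
  by (intro mult_mono) (auto intro: order_trans)

theorem proposition2p3:
  fixes \<theta> :: real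
  assumes "0 < \<theta>" and "\<theta> < 1"
  shows "\<exists>b > 1. transient_chain_pos (noisy_kernel \<theta> b)"
proof -
  define t where "t = (1-\<theta>)/\<theta>"
  define d where "d = 2*\<theta>/(1-\<theta>)"
  define c where "c = (1-\<theta>)/(2*\<theta>)"
  define b where "b = 2 + d + 1152 * t^3"
  have t0: "t > 0" unfolding t_def using assms by simp
  have d0: "d > 0" unfolding d_def using assms by simp
  have cd: "c * d = 1" unfolding c_def d_def using assms by auto
  have c0: "c > 0" unfolding c_def using assms by simp
  have b2: "b \<ge> 2" unfolding b_def using t0 d0 by simp
  have bbig: "b \<ge> 1152 * t^3" unfolding b_def using d0 by simp
  have bc: "b * c \<ge> 1"
  proof -
    have "b * c \<ge> d * c" using c0 unfolding b_def using t0 by (intro mult_right_mono) auto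
    then show ?thesis using cd by (simp add: mult.commute)
  qed
  have bc': "b * ((1-\<theta>)/(2*\<theta>)) \<ge> 1" using bc unfolding c_def .
  define M :: int where "M = \<lceil>4*b*d + 4*d\<rceil> + 2"
  define K where "K = noisy_kernel \<theta> b"
  define R where "R m = pmf (K m) (m-1) / pmf (K m) (m+1)" for m
  have Mb: "real_of_int m \<ge> 4*b*(2*\<theta>/(1-\<theta>)) + 4*(2*\<theta>/(1-\<theta>)) + 2" "m \<ge> 2" if "m \<ge> M" for m
  proof -
    have "real_of_int M \<ge> 4*b*d + 4*d + 2" unfolding M_def by linarith
    moreover have "real_of_int m \<ge> real_of_int M" using that by simp
    ultimately show "real_of_int m \<ge> 4*b*(2*\<theta>/(1-\<theta>)) + 4*(2*\<theta>/(1-\<theta>)) + 2" unfolding d_def by linarith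
    have "4*b*d + 4*d \<ge> 0" using b2 d0 by simp
    then have "M \<ge> 2" unfolding M_def by linarith
    then show "m \<ge> 2" using that by simp
  qed
  have RB: "m \<ge> M \<Longrightarrow> m mod 3 = 0 \<Longrightarrow> R m \<le> 4*t"
           "m \<ge> M \<Longrightarrow> m mod 3 = 1 \<Longrightarrow> R m \<le> 12*t/b"
           "m \<ge> M \<Longrightarrow> m mod 3 = 2 \<Longrightarrow> R m \<le> 12*t" for m
    unfolding R_def K_def t_def using Rbound[OF assms b2 bc' Mb(2) Mb(1)] by auto
  have R0: "R m \<ge> 0" for m unfolding R_def by simp
  have key: "4*t * (12*t/b) * (12*t) \<le> 1/2"
  proof -
    have "4*t * (12*t/b) * (12*t) = 576 * t^3 / b" by (simp add: power3_eq_cube)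
    also have "\<dots> \<le> 1/2" using bbig b2 by (simp add: field_simps)
    finally show ?thesis .
  qed
  have block: "R m * R (m+1) * R (m+2) \<le> 1/2" if m: "m \<ge> M" for m
  proof -
    have m1: "m+1 \<ge> M" "m+2 \<ge> M" using m by auto
    consider "m mod 3 = 0" | "m mod 3 = 1" | "m mod 3 = 2" by linarith
    then show ?thesis
    proof cases
      case 1
      have "(m+1) mod 3 = 1" "(m+2) mod 3 = 2" using 1 by presburger+
      then have "R m * R (m+1) * R (m+2) \<le> 4*t * (12*t/b) * (12*t)"
        using RB m m1 1 R0 by (intro prod3) auto
      then show ?thesis using key by linarith
    next
      case 2
      have "(m+1) mod 3 = 2" "(m+2) mod 3 = 0" using 2 by presburger+
      then have "R m * R (m+1) * R (m+2) \<le> (12*t/b) * (12*t) * (4*t)"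
        using RB m m1 2 R0 by (intro prod3) auto
      moreover have "(12*t/b) * (12*t) * (4*t) = 4*t * (12*t/b) * (12*t)" by (simp add: algebra_simps)
      ultimately show ?thesis using key by linarith
    next
      case 3
      have "(m+1) mod 3 = 0" "(m+2) mod 3 = 1" using 3 by presburger+
      then have "R m * R (m+1) * R (m+2) \<le> (12*t) * (4*t) * (12*t/b)"
        using RB m m1 3 R0 by (intro prod3) auto
      moreover have "(12*t) * (4*t) * (12*t/b) = 4*t * (12*t/b) * (12*t)" by (simp add: algebra_simps)
      ultimately show ?thesis using key by linarith
    qed
  qed
  have "transient_chain_pos K"
    unfolding transient_chain_pos_def
  proof (intro allI impI)
    fix x :: int assume x: "x \<ge> 1"
    show "transient_state K x"
    proof (rule chain_transient[where R=R and M=M and \<rho>="1/2"])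
      show "set_pmf (K m) \<subseteq> {m - 1, m, m + 1}" for m unfolding K_def by (rule support)
      show "pmf (K m) (m + 1) > 0" if "m \<ge> 1" for m
      proof -
        have "pmf (K m) (m + 1) \<ge> \<theta>/(4*b)" unfolding K_def using P_lower_all[OF that assms b2 bc'] .
        moreover have "\<theta>/(4*b) > 0" using assms b2 by simp
        ultimately show ?thesis by linarith
      qed
      show "R m * R (m + 1) * R (m + 2) \<le> 1/2" if "m \<ge> M" for m using block that .
      show "R m = pmf (K m) (m - 1) / pmf (K m) (m + 1)" for m by (rule R_def)
    qed (use x in auto)
  qed
  moreover have "b > 1" using b2 by simp
  ultimately show ?thesis unfolding K_def by blast
qed

end
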